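(* Let $(X,\mathtt{d})$ be an instance of metric $k$-center clustering with $z$ outliers, $|X|=n$, let $\epsilon>0$ and $\eta\in(0,1/2)$. If Algorithm 3 (described in the context) is run with $t=\frac{ck}{1-\eta}$ where $c=2+\frac{2}{k(1-\eta)}\ln\frac{1}{\eta}$, then with probability at least $1-2\eta$ its output $E$ satisfies $\phi_{\epsilon}(X,E)\leq 2r_{\mathtt{opt}}$.
   Context: Let $(X,\mathtt{d})$ be a finite metric space with $|X|=n$ and let $k,z$ be positive integers with $z<n$. The $k$-center clustering with $z$ outliers problem asks for $X'\subseteq X$ with $|X'|\geq n-z$ and centers $c_1,\dots,c_k\in X$ minimizing $\max_{p\in X'}\min_j\mathtt{d}(p,c_j)$; $r_{\mathtt{opt}}$ is the optimal value. For $\epsilon\geq0$ and $A\subseteq X$ of any size, $\phi_\epsilon(X,A)=\min\{\max_{p\in X'}\min_{c\in A}\mathtt{d}(p,c)\;:\;X'\subseteq X,\ |X'|\geq n-(1+\epsilon)z\}$; $\mathtt{d}(p,E)=\min_{q\in E}\mathtt{d}(p,q)$. Algorithm 3 (input $(X,\mathtt{d})$, $k,z$, parameters $\epsilon>0$, $\eta\in(0,1/2)$, $t\in\mathbb{Z}^+$): Let $\gamma=z/n$, $\sigma=\frac{2}{1+\sqrt{1+\frac{4(1+\epsilon)}{3\epsilon}}}$, $n'=\frac{3}{\sigma^2(1+\epsilon)\gamma}\log\frac{4}{\eta}$, and $E=\emptyset$. Set $j=1$ and add to $E$ $\frac{1}{1-\gamma}\log\frac1\eta$ vertices selected uniformly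 at random from $X$. While $j<t$: set $j=j+1$; sample $n'$ vertices uniformly at random from $X$, forming $A_j$; let $\hat r_j$ be the $(1+\sigma)(1+\epsilon)\gamma n'$-th largest value among $\{\mathtt{d}(p,E):p\in A_j\}$, and let $\hat A_j=\{p\in A_j:\mathtt{d}(p,E)\geq\hat r_j\}$; add $\hat A_j$ to $E$. Output $E$. *)

theory Defs
  imports "HOL-Probability.Probability"
begin

definition metric_on :: "'a set \<Rightarrow> ('a \<Rightarrow> 'a \<Rightarrow> real) \<Rightarrow> bool" where
  "metric_on X d \<longleftrightarrow>
     (\<forall>x\<in>X. \<forall>y\<in>X. 0 \<le> d x y) \<and>
     (\<forall>x\<in>X. \<forall>y\<in>X. d x y = 0 \<longleftrightarrow> x = y) \<and>
     (\<forall>x\<in>X. \<forall>y\<in>X. d x y = d y x) \<and>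
     (\<forall>x\<in>X. \<forall>y\<in>X. \<forall>w\<in>X. d x w \<le> d x y + d y w)"

definition dist_set :: "('a \<Rightarrow> 'a \<Rightarrow> real) \<Rightarrow> 'a \<Rightarrow> 'a set \<Rightarrow> real" where
  "dist_set d p E = Min ((\<lambda>q. d p q) ` E)"

text \<open>Radius of a set of points Y w.r.t. centres A: max over p in Y of d(p,A);
  the max over the empty set is taken to be 0.\<close>
definition radius :: "('a \<Rightarrow> 'a \<Rightarrow> real) \<Rightarrow> 'a set \<Rightarrow> 'a set \<Rightarrow> real" where
  "radius d Y A = Max (insert 0 ((\<lambda>p. dist_set d p A) ` Y))"

text \<open>Optimal radius of k-center clustering with z outliers (centres c_1..c_k in X,
  possibly repeated, i.e. a nonempty set of at most k centres).\<close>
definition r_opt :: "'a set \<Rightarrow> ('a \<Rightarrow> 'a \<Rightarrow> real) \<Rightarrow> nat \<Rightarrow> nat \<Rightarrow> real" where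
  "r_opt X d k z = Min {radius d X' C | X' C. X' \<subseteq> X \<and> card X' \<ge> card X - z
                                        \<and> C \<subseteq> X \<and> C \<noteq> {} \<and> card C \<le> k}"

definition phi :: "real \<Rightarrow> 'a set \<Rightarrow> ('a \<Rightarrow> 'a \<Rightarrow> real) \<Rightarrow> nat \<Rightarrow> 'a set \<Rightarrow> real" where
  "phi eps X d z A = Min {radius d X' A | X'. X' \<subseteq> X \<and> real (card X') \<ge> real (card X) - (1 + eps) * real z}"

fun sample_list :: "nat \<Rightarrow> 'a set \<Rightarrow> 'a list pmf" where
  "sample_list 0 X = return_pmf []"
| "sample_list (Suc m) X =
     bind_pmf (pmf_of_set X) (\<lambda>x. bind_pmf (sample_list m X) (\<lambda>xs. return_pmf (x # xs)))"

fun iter_pmf :: "nat \<Rightarrow> ('b \<Rightarrow> 'b pmf) \<Rightarrow> 'b \<Rightarrow> 'b pmf" where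
  "iter_pmf 0 f x = return_pmf x"
| "iter_pmf (Suc n) f x = bind_pmf (f x) (iter_pmf n f)"

text \<open>m-th largest value of a list (with multiplicity); if m exceeds the length,
  the smallest value is used (so that all sampled points are selected).\<close>
definition mth_largest :: "nat \<Rightarrow> real list \<Rightarrow> real" where
  "mth_largest m xs = rev (sort xs) ! (min m (length xs) - 1)"

definition alg3_sigma :: "real \<Rightarrow> real" where
  "alg3_sigma eps = 2 / (1 + sqrt (1 + 4 * (1 + eps) / (3 * eps)))"

definition alg3_gamma :: "'a set \<Rightarrow> nat \<Rightarrow> real" where
  "alg3_gamma X z = real z / real (card X)"

definition alg3_nprime :: "'a set \<Rightarrow> nat \<Rightarrow> real \<Rightarrow> real \<Rightarrow> nat" where
  "alg3_nprime X z eps eta =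
     nat \<lceil>3 / ((alg3_sigma eps)\<^sup>2 * (1 + eps) * alg3_gamma X z) * ln (4 / eta)\<rceil>"

definition alg3_rank :: "'a set \<Rightarrow> nat \<Rightarrow> real \<Rightarrow> real \<Rightarrow> nat" where
  "alg3_rank X z eps eta =
     nat \<lceil>(1 + alg3_sigma eps) * (1 + eps) * alg3_gamma X z * real (alg3_nprime X z eps eta)\<rceil>"

definition alg3_ninit :: "'a set \<Rightarrow> nat \<Rightarrow> real \<Rightarrow> nat" where
  "alg3_ninit X z eta = nat \<lceil>1 / (1 - alg3_gamma X z) * ln (1 / eta)\<rceil>"

definition alg3_step :: "'a set \<Rightarrow> ('a \<Rightarrow> 'a \<Rightarrow> real) \<Rightarrow> nat \<Rightarrow> real \<Rightarrow> real \<Rightarrow> 'a set \<Rightarrow> 'a set pmf" where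
  "alg3_step X d z eps eta E =
     bind_pmf (sample_list (alg3_nprime X z eps eta) X) (\<lambda>A.
       (let r = mth_largest (alg3_rank X z eps eta) (map (\<lambda>p. dist_set d p E) A)
        in return_pmf (E \<union> {p \<in> set A. dist_set d p E \<ge> r})))"

definition alg3 :: "'a set \<Rightarrow> ('a \<Rightarrow> 'a \<Rightarrow> real) \<Rightarrow> nat \<Rightarrow> nat \<Rightarrow> real \<Rightarrow> real \<Rightarrow> nat \<Rightarrow> 'a set pmf" where
  "alg3 X d k z eps eta t =
     bind_pmf (sample_list (alg3_ninit X z eta) X) (\<lambda>E0.
       iter_pmf (t - 1) (alg3_step X d z eps eta) (set E0))"

end

theory Submission
  imports Defs
begin

lemma sample_list_map: "sample_list (Suc m) X = bind_pmf (pmf_of_set X) (\<lambda>x. map_pmf ((#) x) (sample_list m X))"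
  by (simp add: map_pmf_def)

lemma sample_list_support:
  assumes "finite X" "X \<noteq> {}"
  shows "xs \<in> set_pmf (sample_list m X) \<Longrightarrow> length xs = m \<and> set xs \<subseteq> X"
proof (induction m arbitrary: xs)
  case 0 then show ?case by simp
next
  case (Suc m)
  then obtain x ys where "x \<in> X" "ys \<in> set_pmf (sample_list m X)" "xs = x # ys"
    using assms by (auto simp: sample_list_map set_pmf_of_set)
  then show ?case using Suc.IH[of ys] by auto
qed

lemma sample_list_finite:
  assumes "finite X" "X \<noteq> {}"
  shows "finite (set_pmf (sample_list m X))"
proof (rule finite_subset)
  show "set_pmf (sample_list m X) \<subseteq> {xs. set xs \<subseteq> X \<and> length xs = m}"
    using sample_list_support[OF assms] by blast
  show "finite {xs. set xs \<subseteq> X \<and> length xs = m}"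
    using finite_lists_length_eq[OF assms(1)] by simp
qed

lemma sample_list_expect_prod:
  fixes f :: "'a \<Rightarrow> real"
  assumes "finite X" "X \<noteq> {}"
  shows "measure_pmf.expectation (sample_list m X) (\<lambda>xs. prod_list (map f xs)) = (sum f X / card X) ^ m"
proof (induction m)
  case 0 then show ?case by simp
next
  case (Suc m)
  have "measure_pmf.expectation (sample_list (Suc m) X) (\<lambda>xs. prod_list (map f xs))
     = (\<Sum>a\<in>X. measure_pmf.expectation (map_pmf ((#) a) (sample_list m X)) (\<lambda>xs. prod_list (map f xs)) /\<^sub>R real (card X))"
    unfolding sample_list_map
    by (rule pmf_expectation_bind_pmf_of_set) (use assms sample_list_finite[OF assms] in auto)
  also have "\<dots> = (\<Sum>a\<in>X. f a * (sum f X / card X) ^ m / real (card X))"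
    by (simp add: Suc.IH field_simps)
  also have "\<dots> = (sum f X / card X) ^ Suc m"
    by (simp add: sum_divide_distrib[symmetric] sum_distrib_right[symmetric] field_simps)
  finally show ?case .
qed

lemma prob_as_expect: "measure_pmf.prob M A = measure_pmf.expectation M (indicator A)"
  by simp

lemma sum_ind_real: "finite A \<Longrightarrow> (\<Sum>x\<in>A. indicator B x :: real) = real (card (A \<inter> B))"
  by (induction A rule: finite_induct) (auto simp: indicator_def Int_insert_left)

lemma prod_list_indicator: "prod_list (map (indicator A) xs) = (of_bool (set xs \<subseteq> A) :: real)"
  by (induction xs) (auto simp: indicator_def)

lemma prob_none_in:
  assumes "finite X" "X \<noteq> {}"
  shows "measure_pmf.prob (sample_list m X) {xs. \<forall>x\<in>set xs. x \<notin> S} = (real (card (X - S)) / card X) ^ m"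
proof -
  have "measure_pmf.prob (sample_list m X) {xs. \<forall>x\<in>set xs. x \<notin> S}
      = measure_pmf.expectation (sample_list m X) (\<lambda>xs. prod_list (map (indicator (X - S)) xs))"
    unfolding prob_as_expect
  proof (intro integral_cong_AE)
    show "AE xs in measure_pmf (sample_list m X). indicator {xs. \<forall>x\<in>set xs. x \<notin> S} xs = prod_list (map (indicator (X - S)) xs :: real list)"
    proof (subst AE_measure_pmf_iff, intro ballI)
      fix xs assume "xs \<in> set_pmf (sample_list m X)"
      then have "set xs \<subseteq> X" using sample_list_support[OF assms] by blast
      then show "indicator {xs. \<forall>x\<in>set xs. x \<notin> S} xs = prod_list (map (indicator (X - S)) xs :: real list)"
        by (simp add: prod_list_indicator indicator_def) blast
    qed
  qed auto
  also have "\<dots> = (sum (indicator (X - S)) X / card X) ^ m"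
    by (rule sample_list_expect_prod[OF assms])
  also have "sum (indicator (X - S)) X = real (card (X - S))"
    using assms(1) by (simp add: sum_ind_real Int_absorb1)
  finally show ?thesis .
qed

definition cnt :: "'a set \<Rightarrow> 'a list \<Rightarrow> nat" where
  "cnt Q xs = length (filter (\<lambda>x. x \<in> Q) xs)"

lemma prod_list_cnt: "prod_list (map (\<lambda>x. if x \<in> Q then b else 1) xs) = (b::real) ^ cnt Q xs"
  by (induction xs) (auto simp: cnt_def)

lemma chernoff_count:
  assumes "finite X" "X \<noteq> {}" "(b::real) \<ge> 1"
  shows "measure_pmf.prob (sample_list m X) {xs. a \<le> cnt Q xs}
     \<le> (1 + (b - 1) * real (card (X \<inter> Q)) / card X) ^ m / b ^ a"
proof -
  let ?f = "\<lambda>x. if x \<in> Q then b else 1"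
  have "measure_pmf.prob (sample_list m X) {xs. a \<le> cnt Q xs}
     \<le> measure_pmf.prob (sample_list m X) {xs \<in> space (measure_pmf (sample_list m X)). b ^ a \<le> b ^ cnt Q xs}"
    using assms(3) by (intro measure_pmf.finite_measure_mono) (auto intro: power_increasing)
  also have "\<dots> \<le> measure_pmf.expectation (sample_list m X) (\<lambda>xs. b ^ cnt Q xs) / b ^ a"
    using assms(3)
    by (intro integral_Markov_inequality_measure[where A=UNIV] integrable_measure_pmf_finite
          sample_list_finite assms) auto
  also have "measure_pmf.expectation (sample_list m X) (\<lambda>xs. b ^ cnt Q xs) = (sum ?f X / card X) ^ m"
    using sample_list_expect_prod[OF assms(1,2), where f="?f" and m=m] by (simp add: prod_list_cnt)
  also have "sum ?f X = real (card X) + (b - 1) * real (card (X \<inter> Q))"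
  proof -
    have "sum ?f X = sum (\<lambda>x. 1 + (b - 1) * indicator Q x) X"
      by (intro sum.cong) (auto simp: indicator_def)
    also have "\<dots> = real (card X) + (b - 1) * real (card (X \<inter> Q))"
      using assms(1) by (simp add: sum.distrib sum_distrib_left[symmetric] sum_ind_real)
    finally show ?thesis .
  qed
  also have "(real (card X) + (b - 1) * real (card (X \<inter> Q))) / card X = 1 + (b - 1) * real (card (X \<inter> Q)) / card X"
    using assms(1,2) by (simp add: field_simps)
  finally show ?thesis .
qed

lemma ln_lower_bound:
  fixes x :: real assumes "0 \<le> x"
  shows "2 * x / (2 + x) \<le> ln (1 + x)"
proof -
  let ?f = "\<lambda>t::real. ln (1 + t) - 2 * t / (2 + t)"
  have "?f 0 \<le> ?f x"
  proof (rule DERIV_nonneg_imp_nondecreasing[OF assms])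
    fix t :: real assume t: "0 \<le> t" "t \<le> x"
    have "(?f has_real_derivative (1 / (1 + t) - (2 * (2 + t) - 2 * t * 1) / (2 + t)^2)) (at t)"
      using t by (auto intro!: derivative_eq_intros simp: power2_eq_square)
    moreover have "1 / (1 + t) - (2 * (2 + t) - 2 * t * 1) / (2 + t)^2 = t^2 / ((1 + t) * (2 + t)^2)"
    proof -
      have a: "1 + t > 0" "2 + t > 0" using t by auto
      have "1 / (1 + t) - (2 * (2 + t) - 2 * t * 1) / (2 + t)^2 = ((2+t)^2 - (2 * (2 + t) - 2 * t * 1) * (1+t)) / ((1 + t) * (2 + t)^2)"
        using a by (simp add: diff_frac_eq)
      also have "(2+t)^2 - (2 * (2 + t) - 2 * t * 1) * (1+t) = t^2" by (simp add: power2_eq_square algebra_simps)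
      finally show ?thesis .
    qed
    moreover have "t^2 / ((1 + t) * (2 + t)^2) \<ge> 0" using t by simp
    ultimately show "\<exists>y. (?f has_real_derivative y) (at t) \<and> 0 \<le> y" by metis
  qed
  then show ?thesis by simp
qed

lemma chernoff_exponent:
  fixes s :: real assumes "0 \<le> s" "s \<le> 1"
  shows "s + s^2 / 3 \<le> (1 + s) * ln (1 + s)"
proof -
  have "(1 + s) * (2 * s / (2 + s)) \<le> (1 + s) * ln (1 + s)"
    using ln_lower_bound[OF assms(1)] assms by (intro mult_left_mono) auto
  moreover have "s + s^2 / 3 \<le> (1 + s) * (2 * s / (2 + s))"
  proof -
    have "(1 + s) * (2 * s / (2 + s)) - (s + s^2/3) = s^2 * (1 - s) / (3 * (2 + s))"
      using assms by (simp add: field_simps power2_eq_square)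
    also have "\<dots> \<ge> 0" using assms by simp
    finally show ?thesis by simp
  qed
  ultimately show ?thesis by linarith
qed

lemma dist_set_le: "finite E \<Longrightarrow> q \<in> E \<Longrightarrow> dist_set d p E \<le> d p q"
  unfolding dist_set_def by (rule Min_le) auto

lemma dist_set_in: "finite E \<Longrightarrow> E \<noteq> {} \<Longrightarrow> \<exists>q\<in>E. dist_set d p E = d p q"
proof -
  assume "finite E" "E \<noteq> {}"
  then have "Min ((\<lambda>q. d p q) ` E) \<in> (\<lambda>q. d p q) ` E" by (intro Min_in) auto
  then show ?thesis unfolding dist_set_def by auto
qed

lemma dist_set_mono: "finite E' \<Longrightarrow> E \<subseteq> E' \<Longrightarrow> E \<noteq> {} \<Longrightarrow> dist_set d p E' \<le> dist_set d p E"
  unfolding dist_set_def by (rule Min_antimono) auto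

lemma radius_le_iff: "finite Y \<Longrightarrow> radius d Y A \<le> R \<longleftrightarrow> 0 \<le> R \<and> (\<forall>p\<in>Y. dist_set d p A \<le> R)"
  unfolding radius_def by (subst Max.bounded_iff) auto

lemma radius_ge: "finite Y \<Longrightarrow> p \<in> Y \<Longrightarrow> dist_set d p A \<le> radius d Y A"
  unfolding radius_def by (rule Max_ge) auto

lemma radius_nonneg: "finite Y \<Longrightarrow> 0 \<le> radius d Y A"
  unfolding radius_def by (rule Max_ge) auto

lemma phi_le:
  assumes "finite X" "Y \<subseteq> X" "real (card Y) \<ge> real (card X) - (1 + eps) * real z"
  shows "phi eps X d z A \<le> radius d Y A"
  unfolding phi_def
proof (rule Min_le)
  have "{radius d X' A |X'. X' \<subseteq> X \<and> real (card X) - (1 + eps) * real z \<le> real (card X')}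
      \<subseteq> (\<lambda>X'. radius d X' A) ` Pow X" by auto
  then show "finite {radius d X' A |X'. X' \<subseteq> X \<and> real (card X) - (1 + eps) * real z \<le> real (card X')}"
    by (rule finite_subset) (use assms(1) in auto)
qed (use assms in auto)

lemma phi_attained:
  assumes "finite X" "0 \<le> eps"
  shows "\<exists>Y. Y \<subseteq> X \<and> real (card Y) \<ge> real (card X) - (1 + eps) * real z \<and> phi eps X d z A = radius d Y A"
proof -
  let ?S = "{radius d X' A |X'. X' \<subseteq> X \<and> real (card X) - (1 + eps) * real z \<le> real (card X')}"
  have "?S \<subseteq> (\<lambda>X'. radius d X' A) ` Pow X" by auto
  then have fin: "finite ?S" by (rule finite_subset) (use assms(1) in auto)
  have "radius d X A \<in> ?S" using assms by auto
  then have "?S \<noteq> {}" by blast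
  from Min_in[OF fin this] show ?thesis unfolding phi_def by auto
qed

lemma phi_mono:
  assumes "finite X" "0 \<le> eps" "finite E'" "E \<subseteq> E'" "E \<noteq> {}"
  shows "phi eps X d z E' \<le> phi eps X d z E"
proof -
  obtain Y where Y: "Y \<subseteq> X" "real (card Y) \<ge> real (card X) - (1 + eps) * real z" "phi eps X d z E = radius d Y E"
    using phi_attained[OF assms(1,2)] by blast
  have fY: "finite Y" using Y(1) assms(1) finite_subset by blast
  have "phi eps X d z E' \<le> radius d Y E'" by (rule phi_le[OF assms(1) Y(1,2)])
  also have "\<dots> \<le> radius d Y E"
    using fY radius_le_iff[OF fY, of d E' "radius d Y E"] radius_nonneg[OF fY] radius_ge[OF fY, of _ d E]
      dist_set_mono[OF assms(3,4,5)] by (meson order_trans)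
  finally show ?thesis using Y(3) by simp
qed

locale kc =
  fixes X :: "'a set" and d :: "'a \<Rightarrow> 'a \<Rightarrow> real" and k z :: nat and eps eta :: real
    and Xs Cs :: "'a set"
  assumes finX: "finite X" and met: "metric_on X d"
    and kpos: "0 < k" and zpos: "0 < z" and zlt: "z < card X"
    and epspos: "0 < eps" and etapos: "0 < eta" and etalt: "eta < 1/2"
    and XsX: "Xs \<subseteq> X" and Xscard: "card Xs \<ge> card X - z"
    and CsX: "Cs \<subseteq> X" and Csne: "Cs \<noteq> {}" and Cscard: "card Cs \<le> k"
    and ropt: "r_opt X d k z = radius d Xs Cs"
begin

abbreviation "ro \<equiv> r_opt X d k z"

lemma finXs: "finite Xs" using XsX finX finite_subset by blast
lemma finCs: "finite Cs" using CsX finX finite_subset by blast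

lemma ro_nonneg: "0 \<le> ro" using ropt radius_nonneg[OF finXs] by simp

lemma center: "p \<in> Xs \<Longrightarrow> \<exists>c\<in>Cs. d p c \<le> ro"
proof -
  assume p: "p \<in> Xs"
  obtain c where c: "c \<in> Cs" "dist_set d p Cs = d p c" using dist_set_in[OF finCs Csne] by blast
  have "dist_set d p Cs \<le> ro" using radius_ge[OF finXs p] ropt by simp
  with c show ?thesis by auto
qed

lemma met_parts: "(\<forall>x\<in>X. \<forall>y\<in>X. 0 \<le> d x y) \<and> (\<forall>x\<in>X. \<forall>y\<in>X. d x y = 0 \<longleftrightarrow> x = y) \<and>
     (\<forall>x\<in>X. \<forall>y\<in>X. d x y = d y x) \<and> (\<forall>x\<in>X. \<forall>y\<in>X. \<forall>w\<in>X. d x w \<le> d x y + d y w)"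
  using met unfolding metric_on_def .

lemma d_tri: "x \<in> X \<Longrightarrow> y \<in> X \<Longrightarrow> w \<in> X \<Longrightarrow> d x w \<le> d x y + d y w"
  using conjunct2[OF conjunct2[OF conjunct2[OF met_parts]]] by blast
lemma d_sym: "x \<in> X \<Longrightarrow> y \<in> X \<Longrightarrow> d x y = d y x"
  using met_parts by simp
lemma d_nonneg: "x \<in> X \<Longrightarrow> y \<in> X \<Longrightarrow> 0 \<le> d x y"
  using met_parts by simp
lemma d_self: "x \<in> X \<Longrightarrow> d x x = 0"
  using met_parts by simp

definition cov :: "'a set \<Rightarrow> 'a set" where
  "cov E = {c\<in>Cs. \<exists>q\<in>E. d q c \<le> ro}"

lemma cov_sub: "cov E \<subseteq> Cs" unfolding cov_def by auto
lemma cov_mono: "E \<subseteq> E' \<Longrightarrow> cov E \<subseteq> cov E'" unfolding cov_def by auto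

lemma Xs_card_real: "real (card Xs) \<ge> real (card X) - real z"
  using Xscard zlt by linarith

lemma all_cov:
  assumes E: "E \<subseteq> X" "finite E" "E \<noteq> {}" and c: "cov E = Cs"
  shows "phi eps X d z E \<le> 2 * ro"
proof -
  have "phi eps X d z E \<le> radius d Xs E"
  proof (rule phi_le[OF finX XsX])
    have "0 \<le> eps * real z" using epspos by simp
    then show "real (card X) - (1 + eps) * real z \<le> real (card Xs)"
      using Xs_card_real by (simp add: algebra_simps)
  qed
  also have "radius d Xs E \<le> 2 * ro"
  proof (subst radius_le_iff[OF finXs], intro conjI ballI)
    show "0 \<le> 2 * ro" using ro_nonneg by simp
    fix p assume p: "p \<in> Xs"
    obtain cc where cc: "cc \<in> Cs" "d p cc \<le> ro" using center[OF p] by blast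
    then obtain q where q: "q \<in> E" "d q cc \<le> ro" using c unfolding cov_def by blast
    have pX: "p \<in> X" and cX: "cc \<in> X" and qX: "q \<in> X" using p XsX cc(1) CsX q(1) E(1) by auto
    have "dist_set d p E \<le> d p q" by (rule dist_set_le[OF E(2) q(1)])
    also have "\<dots> \<le> d p cc + d cc q" by (rule d_tri[OF pX cX qX])
    also have "d cc q = d q cc" by (rule d_sym[OF cX qX])
    finally show "dist_set d p E \<le> 2 * ro" using cc q by linarith
  qed
  finally show ?thesis .
qed

lemma far_count:
  assumes E: "E \<subseteq> X" "finite E" "E \<noteq> {}" and ph: "phi eps X d z E > 2 * ro"
  shows "real (card {p\<in>Xs. dist_set d p E > 2 * ro}) > eps * z"
proof -
  define W where "W = {p\<in>X. dist_set d p E \<le> 2 * ro}"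
  have finW: "finite W" using finX unfolding W_def by simp
  have WX: "W \<subseteq> X" unfolding W_def by auto
  have "radius d W E \<le> 2 * ro"
    using ro_nonneg by (subst radius_le_iff[OF finW]) (auto simp: W_def)
  then have W: "real (card W) < real (card X) - (1 + eps) * real z"
  proof -
    assume r: "radius d W E \<le> 2 * ro"
    show ?thesis
    proof (rule ccontr)
      assume "\<not> ?thesis"
      then have "phi eps X d z E \<le> radius d W E" by (intro phi_le[OF finX WX]) simp
      with r ph show False by simp
    qed
  qed
  define F where "F = X - W"
  have cF: "card F = card X - card W" unfolding F_def using card_Diff_subset[OF finW WX] .
  have cW: "card W \<le> card X" using card_mono[OF finX WX] .
  have FI: "{p\<in>Xs. dist_set d p E > 2 * ro} = F - (X - Xs)"
    unfolding F_def W_def using XsX by auto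
  have "card F - card (X - Xs) \<le> card (F - (X - Xs))" by (rule diff_card_le_card_Diff) (simp add: F_def finX)
  moreover have "card (X - Xs) = card X - card Xs" using card_Diff_subset[OF finXs XsX] .
  moreover have "card Xs \<le> card X" using card_mono[OF finX XsX] .
  ultimately have "real (card (F - (X - Xs))) \<ge> real (card F) - (real (card X) - real (card Xs))"
    by linarith
  then have "real (card (F - (X - Xs))) \<ge> real (card X) - real (card W) - real z"
    using cF cW Xs_card_real by linarith
  then show ?thesis using FI W by (simp add: algebra_simps)
qed

lemma cov_grow:
  assumes E: "E \<subseteq> E'" "E' \<subseteq> X" "finite E'" and p: "p \<in> E'" "p \<in> Xs" "dist_set d p E > 2 * ro"
  shows "card (cov E) < card (cov E')"
proof -
  have fE: "finite E" using E finite_subset by blast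
  obtain cc where cc: "cc \<in> Cs" "d p cc \<le> ro" using center[OF p(2)] by blast
  have "cc \<notin> cov E"
  proof
    assume "cc \<in> cov E"
    then obtain q where q: "q \<in> E" "d q cc \<le> ro" unfolding cov_def by blast
    have pX: "p \<in> X" and cX: "cc \<in> X" and qX: "q \<in> X" using p XsX cc(1) CsX q(1) E by auto
    have "dist_set d p E \<le> d p q" by (rule dist_set_le[OF fE q(1)])
    also have "\<dots> \<le> d p cc + d cc q" by (rule d_tri[OF pX cX qX])
    also have "d cc q = d q cc" by (rule d_sym[OF cX qX])
    finally show False using cc q p by linarith
  qed
  moreover have "cc \<in> cov E'" using cc p unfolding cov_def by blast
  ultimately have "cov E \<subset> cov E'" using cov_mono[OF E(1)] by blast
  then show ?thesis by (rule psubset_card_mono[OF finite_subset[OF cov_sub finCs]])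
qed

definition s :: "'a set \<Rightarrow> nat" where
  "s E = (if phi eps X d z E \<le> 2 * ro then k else card (cov E))"

lemma s_le: "s E \<le> k"
  unfolding s_def using card_mono[OF finCs cov_sub, of E] Cscard by auto

lemma s_lt:
  assumes E: "E \<subseteq> X" "finite E" "E \<noteq> {}" and ph: "\<not> phi eps X d z E \<le> 2 * ro"
  shows "s E < k"
proof -
  have "cov E \<noteq> Cs" using all_cov[OF E] ph by blast
  then have "cov E \<subset> Cs" using cov_sub by blast
  then have "card (cov E) < card Cs" by (rule psubset_card_mono[OF finCs])
  then show ?thesis using ph Cscard unfolding s_def by simp
qed

lemma s_mono:
  assumes E: "E \<subseteq> E'" "E' \<subseteq> X" "finite E'" "E \<noteq> {}"
  shows "s E \<le> s E'"
proof (cases "phi eps X d z E' \<le> 2 * ro")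
  case True then show ?thesis using s_le unfolding s_def by simp
next
  case False
  then have "\<not> phi eps X d z E \<le> 2 * ro" using phi_mono[OF finX _ E(3,1,4), where eps=eps and z=z and d=d] epspos by force
  then show ?thesis using False card_mono[OF finite_subset[OF cov_sub finCs] cov_mono[OF E(1)]]
    unfolding s_def by simp
qed

lemma s_grow:
  assumes E: "E \<subseteq> E'" "E' \<subseteq> X" "finite E'" "E \<noteq> {}" and ph: "\<not> phi eps X d z E \<le> 2 * ro"
    and p: "p \<in> E'" "p \<in> Xs" "dist_set d p E > 2 * ro"
  shows "s E + 1 \<le> s E'"
proof (cases "phi eps X d z E' \<le> 2 * ro")
  case True
  have "finite E" using E(1,3) finite_subset by blast
  then have "s E < k" using s_lt[OF _ _ E(4) ph] E(1,2) by simp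
  then show ?thesis using True unfolding s_def by simp
next
  case False
  then show ?thesis using ph cov_grow[OF E(1,2,3) p] unfolding s_def by simp
qed

end

lemma mth_largest_count:
  fixes v :: "'a \<Rightarrow> real"
  assumes "xs \<noteq> []" "1 \<le> m"
  shows "min m (length xs) \<le> length (filter (\<lambda>x. mth_largest m (map v xs) \<le> v x) xs)"
proof -
  define ws where "ws = rev (sort (map v xs))"
  define j where "j = min m (length xs)"
  define r where "r = ws ! (j - 1)"
  have lw: "length ws = length xs" unfolding ws_def by simp
  have j: "1 \<le> j" "j \<le> length ws" using assms lw unfolding j_def by (auto simp: Suc_le_eq)
  have r: "mth_largest m (map v xs) = r" unfolding mth_largest_def r_def ws_def j_def by simp
  have ge: "ws ! i \<ge> r" if "i < j" for i
  proof -
    let ?s = "sort (map v xs)"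
    have ls: "length ?s = length ws" unfolding ws_def by simp
    have "ws ! i = ?s ! (length ?s - Suc i)" unfolding ws_def using that j ls
      by (simp add: rev_nth ws_def)
    moreover have "r = ?s ! (length ?s - Suc (j - 1))" unfolding r_def ws_def using j ls
      by (simp add: rev_nth ws_def)
    moreover have "?s ! (length ?s - Suc (j - 1)) \<le> ?s ! (length ?s - Suc i)"
      by (rule sorted_nth_mono) (use that j ls in auto)
    ultimately show ?thesis by simp
  qed
  have "j = card {i. i < j}" by simp
  also have "\<dots> \<le> card {i. i < length ws \<and> r \<le> ws ! i}"
    by (rule card_mono) (use ge j in auto)
  also have "\<dots> = length (filter (\<lambda>y. r \<le> y) ws)" by (simp add: length_filter_conv_card)
  also have "\<dots> = length (filter (\<lambda>y. r \<le> y) (map v xs))"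
  proof -
    have "mset ws = mset (map v xs)" unfolding ws_def by simp
    then have "mset (filter (\<lambda>y. r \<le> y) ws) = mset (filter (\<lambda>y. r \<le> y) (map v xs))" by simp
    then show ?thesis by (metis size_mset)
  qed
  also have "\<dots> = length (filter (\<lambda>x. r \<le> v x) xs)" by (simp add: filter_map comp_def)
  finally show ?thesis unfolding j_def r by simp
qed

lemma length_filter_mono_pred:
  "(\<And>x. x \<in> set xs \<Longrightarrow> P x \<Longrightarrow> Q x) \<Longrightarrow> length (filter P xs) \<le> length (filter Q xs)"
  by (induction xs) auto

lemma sigma_props:
  assumes "0 < eps"
  shows "0 < alg3_sigma eps" "alg3_sigma eps < 1"
    "(alg3_sigma eps)^2 * (1 + eps) = 3 * eps * (1 - alg3_sigma eps)"
proof -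
  define a where "a = 4 * (1 + eps) / (3 * eps)"
  define s where "s = sqrt (1 + a)"
  have a: "0 < a" using assms unfolding a_def by simp
  have s1: "1 < s" using a unfolding s_def by simp
  have ss: "s^2 = 1 + a" unfolding s_def using a by simp
  have sig: "alg3_sigma eps = 2 / (1 + s)" unfolding alg3_sigma_def s_def a_def by simp
  show "0 < alg3_sigma eps" using sig s1 by simp
  show "alg3_sigma eps < 1" using sig s1 by simp
  have "(alg3_sigma eps)^2 * a = 4 - 4 * alg3_sigma eps"
  proof -
    have "(alg3_sigma eps)^2 * a = 4 * (s^2 - 1) / (1 + s)^2" using sig ss by (simp add: power_divide)
    also have "s^2 - 1 = (s - 1) * (1 + s)" by (simp add: power2_eq_square algebra_simps)
    also have "4 * ((s - 1) * (1 + s)) / (1 + s)^2 = 4 * (s - 1) / (1 + s)"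
      using s1 by (simp add: power2_eq_square)
    also have "\<dots> = 4 - 4 * (2 / (1 + s))" using s1 by (simp add: field_simps)
    finally show ?thesis using sig by simp
  qed
  then show "(alg3_sigma eps)^2 * (1 + eps) = 3 * eps * (1 - alg3_sigma eps)"
    using assms unfolding a_def by (simp add: field_simps)
qed

lemma step_map:
  "alg3_step X d z eps eta E = map_pmf (\<lambda>A. E \<union> {p \<in> set A.
      mth_largest (alg3_rank X z eps eta) (map (\<lambda>p. dist_set d p E) A) \<le> dist_set d p E})
     (sample_list (alg3_nprime X z eps eta) X)"
  unfolding alg3_step_def map_pmf_def Let_def by simp

context kc
begin

abbreviation "sg \<equiv> alg3_sigma eps"
abbreviation "gm \<equiv> alg3_gamma X z"
abbreviation "np \<equiv> alg3_nprime X z eps eta"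
abbreviation "rk \<equiv> alg3_rank X z eps eta"
abbreviation "L4 \<equiv> ln (4 / eta)"

lemma Xne: "X \<noteq> {}" using zlt zpos by auto
lemma cardX: "0 < card X" using zlt by simp

lemma gm_props: "0 < gm" "gm < 1" "gm = real z / real (card X)"
  using zpos zlt unfolding alg3_gamma_def by auto

lemma L4_pos: "0 < L4" using etapos etalt by simp

lemma np_ge: "real np * (sg^2 * (1 + eps) * gm) \<ge> 3 * L4"
proof -
  have pos: "0 < sg^2 * (1 + eps) * gm" using sigma_props(1)[OF epspos] gm_props(1) epspos by simp
  have "3 / (sg^2 * (1 + eps) * gm) * L4 \<le> real np"
    unfolding alg3_nprime_def by (rule real_nat_ceiling_ge)
  then show ?thesis using pos by (simp add: field_simps)
qed

lemma np_pos: "1 \<le> np"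
proof -
  have "0 < real np * (sg^2 * (1 + eps) * gm)" using np_ge L4_pos by linarith
  then show ?thesis by (simp add: zero_less_mult_iff)
qed

lemma B1: "eps * gm * real np \<ge> L4"
proof -
  have "3 * L4 \<le> real np * (3 * eps * (1 - sg) * gm)"
    using np_ge sigma_props(3)[OF epspos] by simp
  then have "L4 \<le> eps * gm * real np * (1 - sg)" by (simp add: algebra_simps)
  also have "\<dots> \<le> eps * gm * real np"
    using sigma_props(1)[OF epspos] epspos gm_props(1) by (intro mult_left_le) auto
  finally show ?thesis .
qed

lemma rk_ge: "real rk \<ge> (1 + sg) * ((1 + eps) * gm * real np)"
  unfolding alg3_rank_def using real_nat_ceiling_ge by (simp add: mult.assoc)

lemma rk_pos: "1 \<le> rk"
proof -
  have "0 < (1 + sg) * ((1 + eps) * gm * real np)"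
    using sigma_props(1)[OF epspos] epspos gm_props(1) np_pos by simp
  then show ?thesis using rk_ge by linarith
qed

end

context kc
begin

lemma exp_L4: "exp (- L4) = eta / 4"
  using etapos by (simp add: exp_minus exp_ln)

lemma probB1:
  assumes E: "E \<subseteq> X" "finite E" "E \<noteq> {}" and ph: "\<not> phi eps X d z E \<le> 2 * ro"
  shows "measure_pmf.prob (sample_list np X) {A. \<forall>x\<in>set A. x \<notin> {p\<in>Xs. dist_set d p E > 2 * ro}} \<le> eta / 4"
proof -
  let ?F = "{p\<in>Xs. dist_set d p E > 2 * ro}"
  have c: "real (card ?F) > eps * z" using far_count[OF E] ph by simp
  have FX: "?F \<subseteq> X" using XsX by auto
  have cF: "card ?F \<le> card X" using card_mono[OF finX FX] .
  have cd: "real (card (X - ?F)) = real (card X) - real (card ?F)"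
    using card_Diff_subset[OF finite_subset[OF FX finX] FX] cF by simp
  define b where "b = real (card (X - ?F)) / card X"
  have b0: "0 \<le> b" unfolding b_def by simp
  have ble: "b \<le> 1 - eps * gm"
  proof -
    have "b = 1 - real (card ?F) / card X" unfolding b_def cd using cardX by (simp add: field_simps)
    moreover have "eps * gm \<le> real (card ?F) / card X"
      using c cardX unfolding gm_props(3) by (simp add: field_simps)
    ultimately show ?thesis by simp
  qed
  have "measure_pmf.prob (sample_list np X) {A. \<forall>x\<in>set A. x \<notin> ?F} = b ^ np"
    unfolding b_def by (rule prob_none_in[OF finX Xne])
  also have "\<dots> \<le> (exp (- (eps * gm))) ^ np"
  proof (rule power_mono[OF _ b0])
    have "1 + (- (eps * gm)) \<le> exp (- (eps * gm))" by (rule exp_ge_add_one_self)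
    then show "b \<le> exp (- (eps * gm))" using ble by simp
  qed
  also have "\<dots> = exp (- (eps * gm * real np))"
    by (simp add: exp_of_nat_mult[symmetric] mult.commute)
  also have "\<dots> \<le> exp (- L4)" using B1 by simp
  finally show ?thesis using exp_L4 by simp
qed

lemma probB2:
  "measure_pmf.prob (sample_list np X) {A. rk \<le> cnt (X - Xs) A} \<le> eta / 4"
proof -
  define mu where "mu = (1 + eps) * gm * real np"
  have sg: "0 < sg" "sg < 1" using sigma_props[OF epspos] by auto
  have gm0: "0 < gm" using gm_props by simp
  have cQ: "real (card (X \<inter> (X - Xs))) \<le> real z"
  proof -
    have "X \<inter> (X - Xs) = X - Xs" by auto
    moreover have "card (X - Xs) = card X - card Xs" using card_Diff_subset[OF finXs XsX] .
    ultimately show ?thesis using Xscard by simp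
  qed
  have base: "1 + (1 + sg - 1) * real (card (X \<inter> (X - Xs))) / card X \<le> exp (sg * gm)"
  proof -
    have "(1 + sg - 1) * real (card (X \<inter> (X - Xs))) / card X \<le> sg * gm"
      using cQ sg cardX unfolding gm_props(3) by (simp add: field_simps mult_left_mono)
    moreover have "1 + sg * gm \<le> exp (sg * gm)" by (rule exp_ge_add_one_self)
    ultimately show ?thesis by linarith
  qed
  have "measure_pmf.prob (sample_list np X) {A. rk \<le> cnt (X - Xs) A}
      \<le> (1 + (1 + sg - 1) * real (card (X \<inter> (X - Xs))) / card X) ^ np / (1 + sg) ^ rk"
    by (rule chernoff_count[OF finX Xne]) (use sg in simp)
  also have "\<dots> \<le> exp (sg * gm) ^ np / (1 + sg) ^ rk"
    by (intro divide_right_mono power_mono base) (use sg in auto)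
  also have "exp (sg * gm) ^ np = exp (sg * gm * real np)"
    by (simp add: exp_of_nat_mult[symmetric] mult.commute)
  also have "(1 + sg) ^ rk = exp (real rk * ln (1 + sg))"
    using sg by (simp add: exp_of_nat_mult)
  also have "exp (sg * gm * real np) / exp (real rk * ln (1 + sg)) = exp (sg * gm * real np - real rk * ln (1 + sg))"
    by (simp add: exp_diff)
  also have "\<dots> \<le> exp (- L4)"
  proof -
    have ln0: "0 \<le> ln (1 + sg)" using sg by simp
    have "real rk * ln (1 + sg) \<ge> (1 + sg) * mu * ln (1 + sg)"
      using rk_ge ln0 unfolding mu_def by (intro mult_right_mono) (auto simp: mult.assoc)
    moreover have "(1 + sg) * ln (1 + sg) * mu \<ge> (sg + sg^2/3) * mu"
      using chernoff_exponent[of sg] sg gm0 epspos unfolding mu_def by (intro mult_right_mono) auto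
    moreover have "sg * gm * real np \<le> sg * mu"
    proof -
      have "gm * real np \<le> (1 + eps) * gm * real np" using epspos gm0 by (simp add: mult_right_mono)
      then show ?thesis using sg unfolding mu_def by (simp add: mult_left_mono)
    qed
    moreover have "mu * sg^2 / 3 \<ge> L4" using np_ge unfolding mu_def by (simp add: algebra_simps)
    ultimately have "sg * gm * real np - real rk * ln (1 + sg) \<le> - L4"
      by (simp add: algebra_simps)
    then show ?thesis by simp
  qed
  finally show ?thesis using exp_L4 by simp
qed

end

context kc
begin

lemma step_combi:
  assumes AX: "set A \<subseteq> X" and p: "p \<in> set A" "p \<in> Xs" "dist_set d p E > 2 * ro"
    and cnt: "cnt (X - Xs) A < rk"
  shows "\<exists>x\<in>E \<union> {p \<in> set A. mth_largest rk (map (\<lambda>p. dist_set d p E) A) \<le> dist_set d p E}.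
           x \<in> Xs \<and> dist_set d x E > 2 * ro"
proof (rule ccontr)
  let ?v = "\<lambda>p. dist_set d p E"
  let ?r = "mth_largest rk (map ?v A)"
  assume no: "\<not> ?thesis"
  then have vp: "?v p < ?r" using p by force
  have inQ: "x \<in> X - Xs" if "x \<in> set A" "?r \<le> ?v x" for x
  proof -
    have "x \<in> X" using that AX by auto
    moreover have "x \<notin> Xs" using no that vp p by force
    ultimately show ?thesis by simp
  qed
  have "length (filter (\<lambda>x. ?r \<le> ?v x) A) \<le> cnt (X - Xs) A"
    unfolding cnt_def by (rule length_filter_mono_pred) (use inQ in blast)
  moreover have "min rk (length A) \<le> length (filter (\<lambda>x. ?r \<le> ?v x) A)"
    by (rule mth_largest_count) (use p rk_pos in auto)
  moreover have "length (filter (\<lambda>x. ?r \<le> ?v x) A) < length A"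
    by (rule length_filter_less[OF p(1)]) (use vp in simp)
  ultimately show False using cnt by linarith
qed

lemma step_success:
  assumes E: "E \<subseteq> X" "finite E" "E \<noteq> {}" and ph: "\<not> phi eps X d z E \<le> 2 * ro"
  shows "measure_pmf.prob (alg3_step X d z eps eta E) {E'. \<exists>p\<in>E'. p \<in> Xs \<and> dist_set d p E > 2 * ro}
           \<ge> 1 - eta / 2"
proof -
  let ?G = "{E'. \<exists>p\<in>E'. p \<in> Xs \<and> dist_set d p E > 2 * ro}"
  let ?h = "\<lambda>A. E \<union> {p \<in> set A. mth_largest rk (map (\<lambda>p. dist_set d p E) A) \<le> dist_set d p E}"
  let ?M = "sample_list np X"
  let ?B1 = "{A. \<forall>x\<in>set A. x \<notin> {p\<in>Xs. dist_set d p E > 2 * ro}}"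
  let ?B2 = "{A. rk \<le> cnt (X - Xs) A}"
  have sub: "- (?h -` ?G) \<inter> set_pmf ?M \<subseteq> ?B1 \<union> ?B2"
  proof
    fix A assume A: "A \<in> - (?h -` ?G) \<inter> set_pmf ?M"
    have AX: "set A \<subseteq> X" using A sample_list_support[OF finX Xne] by blast
    show "A \<in> ?B1 \<union> ?B2"
    proof (rule ccontr)
      assume "A \<notin> ?B1 \<union> ?B2"
      then obtain p where p: "p \<in> set A" "p \<in> Xs" "dist_set d p E > 2 * ro" and c: "cnt (X - Xs) A < rk"
        by auto
      from step_combi[OF AX p c] have "A \<in> ?h -` ?G" by simp
      with A show False by blast
    qed
  qed
  have "measure_pmf.prob ?M (- (?h -` ?G)) = measure_pmf.prob ?M (- (?h -` ?G) \<inter> set_pmf ?M)"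
    by (simp add: measure_Int_set_pmf)
  also have "\<dots> \<le> measure_pmf.prob ?M (?B1 \<union> ?B2)"
    by (rule measure_pmf.finite_measure_mono[OF sub]) simp
  also have "\<dots> \<le> measure_pmf.prob ?M ?B1 + measure_pmf.prob ?M ?B2"
    by (rule measure_Un_le) auto
  also have "\<dots> \<le> eta / 4 + eta / 4" using probB1[OF E ph] probB2 by linarith
  finally have "measure_pmf.prob ?M (- (?h -` ?G)) \<le> eta / 2" by simp
  moreover have "measure_pmf.prob ?M (- (?h -` ?G)) = 1 - measure_pmf.prob ?M (?h -` ?G)"
    using measure_pmf.prob_compl[of "?h -` ?G" ?M] by (simp add: Compl_eq_Diff_UNIV)
  moreover have "measure_pmf.prob (alg3_step X d z eps eta E) ?G = measure_pmf.prob ?M (?h -` ?G)"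
    unfolding step_map by simp
  ultimately show ?thesis by linarith
qed

lemma step_support:
  assumes "E' \<in> set_pmf (alg3_step X d z eps eta E)" "E \<subseteq> X" "finite E"
  shows "E \<subseteq> E' \<and> E' \<subseteq> X \<and> finite E'"
  using assms sample_list_support[OF finX Xne] unfolding step_map by auto

lemma step_finite: "finite (set_pmf (alg3_step X d z eps eta E))"
  unfolding step_map by (simp add: sample_list_finite[OF finX Xne])

end

lemma prob_bind_pmf:
  "measure_pmf.prob (bind_pmf M f) A = measure_pmf.expectation M (\<lambda>x. measure_pmf.prob (f x) A)"
proof -
  have "ennreal (measure_pmf.prob (bind_pmf M f) A) = emeasure (bind_pmf M f) A"
    by (simp add: measure_pmf.emeasure_eq_measure)
  also have "\<dots> = (\<integral>\<^sup>+x. emeasure (f x) A \<partial>M)" by simp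
  also have "\<dots> = (\<integral>\<^sup>+x. ennreal (measure_pmf.prob (f x) A) \<partial>M)"
    by (simp add: measure_pmf.emeasure_eq_measure)
  also have "\<dots> = ennreal (measure_pmf.expectation M (\<lambda>x. measure_pmf.prob (f x) A))"
    by (intro nn_integral_eq_integral measure_pmf.integrable_const_bound[where B=1]) auto
  finally show ?thesis by (simp add: measure_nonneg integral_nonneg_AE)
qed

context kc
begin

abbreviation "Bad \<equiv> {E'. \<not> phi eps X d z E' \<le> 2 * ro}"
abbreviation "yy \<equiv> eta / 2 + (1 - eta / 2) * eta"
abbreviation "stp \<equiv> alg3_step X d z eps eta"

definition Phi :: "'a set \<Rightarrow> nat \<Rightarrow> real" where
  "Phi E m = (if phi eps X d z E \<le> 2 * ro then 0 else (1 / eta) ^ (k - s E) * yy ^ m)"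

lemma Phi_le: "Phi E m \<le> (1 / eta) ^ (k - s E) * yy ^ m"
  unfolding Phi_def using etapos etalt by auto

lemma u_pow_mono: "a \<le> b \<Longrightarrow> (1 / eta) ^ a \<le> (1 / eta) ^ b"
  using etapos etalt by (intro power_increasing) auto

lemma iter_bound:
  "E \<subseteq> X \<Longrightarrow> finite E \<Longrightarrow> E \<noteq> {} \<Longrightarrow> measure_pmf.prob (iter_pmf m stp E) Bad \<le> Phi E m"
proof (induction m arbitrary: E)
  case 0
  show ?case
  proof (cases "phi eps X d z E \<le> 2 * ro")
    case True then show ?thesis unfolding Phi_def by simp
  next
    case False
    have "1 \<le> (1 / eta) ^ (k - s E)" using etapos etalt by (intro one_le_power) auto
    then show ?thesis using False unfolding Phi_def by simp
  qed
next
  case (Suc m)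
  let ?M = "stp E"
  let ?g = "\<lambda>E'. measure_pmf.prob (iter_pmf m stp E') Bad"
  have P: "measure_pmf.prob (iter_pmf (Suc m) stp E) Bad = measure_pmf.expectation ?M ?g"
    by (simp add: prob_bind_pmf)
  have sup: "E \<subseteq> E' \<and> E' \<subseteq> X \<and> finite E'" if "E' \<in> set_pmf ?M" for E'
    using step_support[OF that Suc.prems(1,2)] .
  have IH: "?g E' \<le> Phi E' m" if "E' \<in> set_pmf ?M" for E'
    using Suc.IH[of E'] sup[OF that] Suc.prems(3) by blast
  have int: "integrable (measure_pmf ?M) f" for f :: "'a set \<Rightarrow> real"
    by (rule integrable_measure_pmf_finite[OF step_finite])
  show ?case
  proof (cases "phi eps X d z E \<le> 2 * ro")
    case True
    have "?g E' \<le> 0" if "E' \<in> set_pmf ?M" for E'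
    proof -
      have "phi eps X d z E' \<le> phi eps X d z E"
        using phi_mono[OF finX _ _ _ Suc.prems(3)] sup[OF that] epspos by auto
      then show ?thesis using IH[OF that] True unfolding Phi_def by simp
    qed
    then have "measure_pmf.expectation ?M ?g \<le> measure_pmf.expectation ?M (\<lambda>_. 0)"
      by (intro integral_mono_AE int) (simp add: AE_measure_pmf_iff)
    then show ?thesis using P True unfolding Phi_def by simp
  next
    case False
    let ?G = "{E'. \<exists>p\<in>E'. p \<in> Xs \<and> dist_set d p E > 2 * ro}"
    define u where "u = 1 / eta"
    define j where "j = k - s E"
    have u1: "1 \<le> u" using etapos etalt unfolding u_def by auto
    have j1: "1 \<le> j" using s_lt[OF Suc.prems False] unfolding j_def by simp
    define c where "c = yy ^ m * u ^ (j - 1)"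
    have c0: "0 \<le> c" unfolding c_def using etapos etalt u1 by auto
    have uj: "u ^ j = u ^ (j - 1) * u"
    proof -
      have "j = Suc (j - 1)" using j1 by simp
      then show ?thesis by (metis power_Suc2)
    qed
    have yy0: "0 \<le> yy ^ m" using etapos etalt by simp
    have bound: "?g E' \<le> c * u - c * (u - 1) * indicator ?G E'" if "E' \<in> set_pmf ?M" for E'
    proof -
      have sE': "E \<subseteq> E'" "E' \<subseteq> X" "finite E'" using sup[OF that] by auto
      have g1: "?g E' \<le> u ^ (k - s E') * yy ^ m"
        using order_trans[OF IH[OF that] Phi_le] unfolding u_def .
      show ?thesis
      proof (cases "E' \<in> ?G")
        case True
        then obtain p where p: "p \<in> E'" "p \<in> Xs" "dist_set d p E > 2 * ro" by blast
        have "s E + 1 \<le> s E'" by (rule s_grow[OF sE' Suc.prems(3) False p])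
        then have "k - s E' \<le> j - 1" unfolding j_def by simp
        then have "u ^ (k - s E') \<le> u ^ (j - 1)" unfolding u_def by (rule u_pow_mono)
        then have "u ^ (k - s E') * yy ^ m \<le> u ^ (j - 1) * yy ^ m"
          using yy0 by (rule mult_right_mono)
        moreover have "c * u - c * (u - 1) * indicator ?G E' = c" using True by (simp add: algebra_simps)
        ultimately show ?thesis using g1 unfolding c_def by (simp add: mult.commute)
      next
        case nG: False
        have "s E \<le> s E'" by (rule s_mono[OF sE' Suc.prems(3)])
        then have "k - s E' \<le> j" unfolding j_def by simp
        then have "u ^ (k - s E') \<le> u ^ j" unfolding u_def by (rule u_pow_mono)
        then have "u ^ (k - s E') * yy ^ m \<le> u ^ j * yy ^ m"
          using yy0 by (rule mult_right_mono)
        moreover have "c * u - c * (u - 1) * indicator ?G E' = c * u"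
        proof -
          have "indicator ?G E' = (0::real)" using nG by simp
          then show ?thesis by simp
        qed
        moreover have "u ^ j * yy ^ m = c * u" unfolding c_def uj by simp
        ultimately show ?thesis using g1 by linarith
      qed
    qed
    have "measure_pmf.expectation ?M ?g \<le> measure_pmf.expectation ?M (\<lambda>E'. c * u - c * (u - 1) * indicator ?G E')"
      by (intro integral_mono_AE int) (use bound in \<open>simp add: AE_measure_pmf_iff\<close>)
    also have "\<dots> = c * u - c * (u - 1) * measure_pmf.prob ?M ?G"
      by (simp add: int)
    also have "\<dots> \<le> c * u - c * (u - 1) * (1 - eta / 2)"
      using step_success[OF Suc.prems False] c0 u1 by (intro diff_left_mono mult_left_mono) auto
    also have "\<dots> = u ^ j * yy ^ Suc m"
    proof -
      have "u * yy = u - (u - 1) * (1 - eta / 2)" unfolding u_def using etapos by (simp add: field_simps)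
      have "c * u - c * (u - 1) * (1 - eta / 2) = c * (u - (u - 1) * (1 - eta / 2))"
        by (simp add: algebra_simps)
      also have "\<dots> = c * (u * yy)" using \<open>u * yy = _\<close> by simp
      also have "\<dots> = u ^ j * yy ^ Suc m" unfolding c_def uj by (simp add: ac_simps)
      finally show ?thesis .
    qed
    finally show ?thesis using P False unfolding Phi_def u_def j_def by simp
  qed
qed

end

lemma final_numeric:
  fixes eta :: real and k t :: nat
  assumes eta: "0 < eta" "eta < 1/2" and k: "0 < k"
    and t: "t = nat \<lceil>(2 + 2 / (real k * (1 - eta)) * ln (1 / eta)) * real k / (1 - eta)\<rceil>"
  shows "(1 / eta) ^ k * (eta / 2 + (1 - eta / 2) * eta) ^ (t - 1) \<le> 2 * eta"
proof -
  define a where "a = (3 - eta) / 2"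
  have yy: "eta / 2 + (1 - eta / 2) * eta = eta * a" unfolding a_def by (simp add: field_simps)
  have a: "0 < a" "a \<le> 3/2" using eta unfolding a_def by auto
  have ya1: "eta * a \<le> 1/2 * (3/2)" using eta a by (intro mult_mono) auto
  have ya: "eta * a \<le> 1" "0 \<le> eta * a" using ya1 eta a by auto
  have lnb: "1 - eta \<le> ln (1 / eta)" using ln_le_minus_one[of eta] eta by (simp add: ln_div)
  have ck: "(2 + 2 / (real k * (1 - eta)) * ln (1 / eta)) * real k = 2 * real k + 2 * ln (1 / eta) / (1 - eta)"
    using k eta by (simp add: field_simps)
  have "2 * ln (1 / eta) / (1 - eta) \<ge> 2 * (1 - eta) / (1 - eta)"
    using lnb eta by (intro divide_right_mono) auto
  moreover have "2 * (1 - eta) / (1 - eta) = 2" using eta by (intro nonzero_mult_div_cancel_right) simp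
  ultimately have ck2: "(2 + 2 / (real k * (1 - eta)) * ln (1 / eta)) * real k \<ge> 2 * real k + 2"
    using ck by linarith
  have tge: "real t \<ge> (2 * real k + 2) / (1 - eta)"
  proof -
    have "(2 * real k + 2) / (1 - eta) \<le> (2 + 2 / (real k * (1 - eta)) * ln (1 / eta)) * real k / (1 - eta)"
      using ck2 eta by (intro divide_right_mono) auto
    also have "\<dots> \<le> real t" unfolding t by (rule real_nat_ceiling_ge)
    finally show ?thesis .
  qed
  have pw: "(1 / eta) ^ k * (eta * a) ^ (M + k) = eta ^ M * a ^ (M + k)" for M
  proof -
    have "(1 / eta) ^ k * (eta * a) ^ (M + k) = ((1 / eta) ^ k * eta ^ k) * eta ^ M * a ^ (M + k)"
      by (simp add: power_mult_distrib power_add ac_simps)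
    also have "(1 / eta) ^ k * eta ^ k = 1" using eta by (simp add: power_mult_distrib[symmetric])
    finally show ?thesis by simp
  qed
  show ?thesis
  proof (cases "eta \<le> 1/3")
    case True
    have "(2 * real k + 2) / (1 - eta) \<ge> 2 * real k + 2"
      using eta k by (simp add: field_simps)
    then have "t - 1 \<ge> (k + 1) + k" using tge by linarith
    then have "(eta * a) ^ (t - 1) \<le> (eta * a) ^ ((k + 1) + k)"
      using ya by (intro power_decreasing) auto
    then have "(1 / eta) ^ k * (eta * a) ^ (t - 1) \<le> (1 / eta) ^ k * (eta * a) ^ ((k + 1) + k)"
      using eta by (intro mult_left_mono) auto
    also have "\<dots> = eta ^ (k + 1) * a ^ ((k + 1) + k)" by (rule pw)
    also have "\<dots> = (eta * a) * (eta * a ^ 2) ^ k"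
      by (simp add: power_mult_distrib power_add power_mult[symmetric] mult_2_right numeral_3_eq_3 ac_simps)
    also have "\<dots> \<le> (eta * a) * 1"
    proof (intro mult_left_mono power_le_one)
      have "a ^ 2 \<le> (3/2)^2" using a by (intro power_mono) auto
      then have "eta * a ^ 2 \<le> 1/3 * (3/2)^2" using True eta by (intro mult_mono) auto
      then show "eta * a ^ 2 \<le> 1" by (simp add: power2_eq_square)
    qed (use eta a in auto)
    also have "\<dots> \<le> 2 * eta" using a eta by simp
    finally show ?thesis unfolding yy .
  next
    case False
    have "(real k + 1) * (3 * (1 - eta)) \<le> (real k + 1) * 2"
      using False by (intro mult_left_mono) auto
    then have "(3 * real k + 3) * (1 - eta) \<le> 2 * real k + 2" by (simp add: algebra_simps)
    then have "(2 * real k + 2) / (1 - eta) \<ge> 3 * real k + 3"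
      using eta by (simp add: pos_le_divide_eq)
    then have "t - 1 \<ge> (2 * k + 2) + k" using tge by linarith
    then have "(eta * a) ^ (t - 1) \<le> (eta * a) ^ ((2 * k + 2) + k)"
      using ya by (intro power_decreasing) auto
    then have "(1 / eta) ^ k * (eta * a) ^ (t - 1) \<le> (1 / eta) ^ k * (eta * a) ^ ((2 * k + 2) + k)"
      using eta by (intro mult_left_mono) auto
    also have "\<dots> = eta ^ (2 * k + 2) * a ^ ((2 * k + 2) + k)" by (rule pw)
    also have "\<dots> = (eta ^ 2 * a ^ 2) * (eta ^ 2 * a ^ 3) ^ k"
      by (simp add: power_mult_distrib power_add power_mult[symmetric] mult_2_right numeral_3_eq_3 power2_eq_square ac_simps)
    also have "\<dots> \<le> (eta ^ 2 * a ^ 2) * 1"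
    proof (intro mult_left_mono power_le_one)
      have "a ^ 3 \<le> (3/2)^3" using a by (intro power_mono) auto
      moreover have "eta ^ 2 \<le> (1/2)^2" using eta by (intro power_mono) auto
      ultimately have "eta ^ 2 * a ^ 3 \<le> (1/2)^2 * (3/2)^3" using a by (intro mult_mono) auto
      then show "eta ^ 2 * a ^ 3 \<le> 1" by (simp add: power_numeral_reduce)
    qed (use eta a in auto)
    also have "\<dots> \<le> 2 * eta"
    proof -
      have "a ^ 2 \<le> (3/2)^2" using a by (intro power_mono) auto
      then have "eta * a ^ 2 \<le> 1/2 * (3/2)^2" using eta by (intro mult_mono) auto
      then have "eta * a ^ 2 \<le> 2" by (simp add: power2_eq_square)
      then have "eta * (eta * a ^ 2) \<le> eta * 2" using eta by (intro mult_left_mono) auto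
      then show ?thesis by (simp add: power2_eq_square ac_simps)
    qed
    finally show ?thesis unfolding yy .
  qed
qed

theorem theorem10:
  fixes X :: "'a set" and d :: "'a \<Rightarrow> 'a \<Rightarrow> real" and k z :: nat and eps eta :: real
  assumes "finite X" and "metric_on X d"
    and "0 < k" and "0 < z" and "z < card X"
    and "0 < eps" and "0 < eta" and "eta < 1/2"
  defines "c \<equiv> 2 + 2 / (real k * (1 - eta)) * ln (1 / eta)"
  defines "t \<equiv> nat \<lceil>c * real k / (1 - eta)\<rceil>"
  shows "measure_pmf.prob (alg3 X d k z eps eta t)
           {E. phi eps X d z E \<le> 2 * r_opt X d k z} \<ge> 1 - 2 * eta"
proof -
  note A = assms(1-8)
  have Xne: "X \<noteq> {}" using A(4,5) by auto
  then obtain x0 where x0: "x0 \<in> X" by blast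
  let ?S = "{radius d X' C | X' C. X' \<subseteq> X \<and> card X' \<ge> card X - z \<and> C \<subseteq> X \<and> C \<noteq> {} \<and> card C \<le> k}"
  have "?S \<subseteq> (\<lambda>(X', C). radius d X' C) ` (Pow X \<times> Pow X)" by auto
  then have finS: "finite ?S" by (rule finite_subset) (use A(1) in auto)
  have "radius d X {x0} \<in> ?S" using x0 A(3) by force
  then have "?S \<noteq> {}" by blast
  from Min_in[OF finS this] obtain Xs Cs where XC: "Xs \<subseteq> X" "card Xs \<ge> card X - z" "Cs \<subseteq> X" "Cs \<noteq> {}"
    "card Cs \<le> k" "r_opt X d k z = radius d Xs Cs"
    unfolding r_opt_def by blast
  interpret kc X d k z eps eta Xs Cs
    by unfold_locales (use A XC in auto)
  let ?Bad = "{E'. \<not> phi eps X d z E' \<le> 2 * r_opt X d k z}"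
  let ?N = "sample_list (alg3_ninit X z eta) X"
  have ninit: "0 < alg3_ninit X z eta"
  proof -
    have "0 < 1 / (1 - alg3_gamma X z) * ln (1 / eta)" using gm_props(2) A(7,8) by simp
    then show ?thesis unfolding alg3_ninit_def by simp
  qed
  have bnd: "(1 / eta) ^ k * yy ^ (t - 1) \<le> 2 * eta"
    by (rule final_numeric[OF A(7,8,3)]) (simp add: t_def c_def)
  have each: "measure_pmf.prob (iter_pmf (t - 1) stp (set E0)) ?Bad \<le> 2 * eta" if "E0 \<in> set_pmf ?N" for E0
  proof -
    have E0: "length E0 = alg3_ninit X z eta" "set E0 \<subseteq> X" using sample_list_support[OF A(1) Xne that] by auto
    then have ne: "set E0 \<noteq> {}" using ninit by auto
    have "measure_pmf.prob (iter_pmf (t - 1) stp (set E0)) ?Bad \<le> Phi (set E0) (t - 1)"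
      by (rule iter_bound[OF E0(2) _ ne]) simp
    also have "\<dots> \<le> (1 / eta) ^ (k - s (set E0)) * yy ^ (t - 1)" by (rule Phi_le)
    also have "\<dots> \<le> (1 / eta) ^ k * yy ^ (t - 1)"
      using A(7,8) by (intro mult_right_mono u_pow_mono) auto
    finally show ?thesis using bnd by linarith
  qed
  have "measure_pmf.prob (alg3 X d k z eps eta t) ?Bad
      = measure_pmf.expectation ?N (\<lambda>E0. measure_pmf.prob (iter_pmf (t - 1) stp (set E0)) ?Bad)"
    unfolding alg3_def by (rule prob_bind_pmf)
  also have "\<dots> \<le> measure_pmf.expectation ?N (\<lambda>_. 2 * eta)"
    by (intro integral_mono_AE integrable_measure_pmf_finite sample_list_finite[OF A(1) Xne])
       (use each in \<open>simp add: AE_measure_pmf_iff\<close>)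
  also have "\<dots> = 2 * eta" by simp
  finally have bad: "measure_pmf.prob (alg3 X d k z eps eta t) ?Bad \<le> 2 * eta" .
  have "measure_pmf.prob (alg3 X d k z eps eta t) ?Bad
      = 1 - measure_pmf.prob (alg3 X d k z eps eta t) {E. phi eps X d z E \<le> 2 * r_opt X d k z}"
    using measure_pmf.prob_compl[of "{E. phi eps X d z E \<le> 2 * r_opt X d k z}" "alg3 X d k z eps eta t"]
    by (simp add: Compl_eq_Diff_UNIV[symmetric] Collect_neg_eq)
  then show ?thesis using bad by linarith
qed

end
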